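(* Let $(\mathfrak{g},[\cdot,\cdot]_{\mathfrak{g}})$ be a Leibniz algebra, $(V;\rho^L,\rho^R)$ a representation, and $T:V\to\mathfrak{g}$ a relative Rota-Baxter operator. Define $\bar\rho^L,\bar\rho^R:V\to\mathfrak{gl}(\mathfrak{g})$ by $\bar\rho^L(u)x=[Tu,x]_{\mathfrak{g}}-T\rho^R(x)u$ and $\bar\rho^R(u)x=[x,Tu]_{\mathfrak{g}}-T\rho^L(x)u$ for $u\in V$, $x\in\mathfrak{g}$. Then $(\mathfrak{g};\bar\rho^L,\bar\rho^R)$ is a representation of the Leibniz algebra $(V,[\cdot,\cdot]_T)$, where $[u,v]_T=\rho^L(Tu)v+\rho^R(Tv)u$.
   Context: A Leibniz algebra is a vector space $\mathfrak{g}$ with bilinear $[\cdot,\cdot]_{\mathfrak{g}}$ satisfying $[x,[y,z]_{\mathfrak{g}}]_{\mathfrak{g}}=[[x,y]_{\mathfrak{g}},z]_{\mathfrak{g}}+[y,[x,z]_{\mathfrak{g}}]_{\mathfrak{g}}$. A representation $(W;\sigma^L,\sigma^R)$ of a Leibniz algebra $(\mathfrak{h},[\cdot,\cdot]_{\mathfrak{h}})$ is a vector space $W$ with linear maps $\sigma^L,\sigma^R:\mathfrak{h}\to\mathfrak{gl}(W)$ such that $\sigma^L([x,y]_{\mathfrak{h}})=[\sigma^L(x),\sigma^L(y)]$, $\sigma^R([x,y]_{\mathfrak{h}})=[\sigma^L(x),\sigma^R(y)]$, $\sigma^R(y)\sigma^L(x)=-\sigma^R(y)\sigma^R(x)$ for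 all $x,y\in\mathfrak{h}$ (commutators in $\mathfrak{gl}(W)$). A relative Rota-Baxter operator on $\mathfrak{g}$ with respect to a representation $(V;\rho^L,\rho^R)$ is a linear $T:V\to\mathfrak{g}$ with $[Tv_1,Tv_2]_{\mathfrak{g}}=T(\rho^L(Tv_1)v_2+\rho^R(Tv_2)v_1)$; then $(V,[\cdot,\cdot]_T)$ is a Leibniz algebra. *)

theory Defs
  imports Main "HOL.Vector_Spaces"
begin

definition bilinear_map ::
  "('k::field \<Rightarrow> 'a::ab_group_add \<Rightarrow> 'a) \<Rightarrow> ('k \<Rightarrow> 'b::ab_group_add \<Rightarrow> 'b) \<Rightarrow>
   ('k \<Rightarrow> 'c::ab_group_add \<Rightarrow> 'c) \<Rightarrow> ('a \<Rightarrow> 'b \<Rightarrow> 'c) \<Rightarrow> bool" where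
  "bilinear_map sa sb sc f \<longleftrightarrow>
     (\<forall>x. Vector_Spaces.linear sb sc (f x)) \<and> (\<forall>y. Vector_Spaces.linear sa sc (\<lambda>x. f x y))"

definition leibniz_algebra ::
  "('k::field \<Rightarrow> 'g::ab_group_add \<Rightarrow> 'g) \<Rightarrow> ('g \<Rightarrow> 'g \<Rightarrow> 'g) \<Rightarrow> bool" where
  "leibniz_algebra s br \<longleftrightarrow>
     vector_space s \<and> bilinear_map s s s br \<and>
     (\<forall>x y z. br x (br y z) = br (br x y) z + br y (br x z))"

definition commutator :: "('w \<Rightarrow> 'w::ab_group_add) \<Rightarrow> ('w \<Rightarrow> 'w) \<Rightarrow> ('w \<Rightarrow> 'w)" where
  "commutator A B = (\<lambda>w. A (B w) - B (A w))"

definition linear_to_gl ::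
  "('k::field \<Rightarrow> 'h::ab_group_add \<Rightarrow> 'h) \<Rightarrow> ('k \<Rightarrow> 'w::ab_group_add \<Rightarrow> 'w) \<Rightarrow>
   ('h \<Rightarrow> 'w \<Rightarrow> 'w) \<Rightarrow> bool" where
  "linear_to_gl sh sw \<sigma> \<longleftrightarrow>
     (\<forall>x. Vector_Spaces.linear sw sw (\<sigma> x)) \<and> (\<forall>w. Vector_Spaces.linear sh sw (\<lambda>x. \<sigma> x w))"

definition leibniz_rep ::
  "('k::field \<Rightarrow> 'h::ab_group_add \<Rightarrow> 'h) \<Rightarrow> ('h \<Rightarrow> 'h \<Rightarrow> 'h) \<Rightarrow>
   ('k \<Rightarrow> 'w::ab_group_add \<Rightarrow> 'w) \<Rightarrow> ('h \<Rightarrow> 'w \<Rightarrow> 'w) \<Rightarrow> ('h \<Rightarrow> 'w \<Rightarrow> 'w) \<Rightarrow> bool" where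
  "leibniz_rep sh br sw \<sigma>L \<sigma>R \<longleftrightarrow>
     vector_space sw \<and> linear_to_gl sh sw \<sigma>L \<and> linear_to_gl sh sw \<sigma>R \<and>
     (\<forall>x y. \<sigma>L (br x y) = commutator (\<sigma>L x) (\<sigma>L y)) \<and>
     (\<forall>x y. \<sigma>R (br x y) = commutator (\<sigma>L x) (\<sigma>R y)) \<and>
     (\<forall>x y. \<sigma>R y \<circ> \<sigma>L x = - (\<sigma>R y \<circ> \<sigma>R x))"

definition relative_RB ::
  "('k::field \<Rightarrow> 'v::ab_group_add \<Rightarrow> 'v) \<Rightarrow> ('k \<Rightarrow> 'g::ab_group_add \<Rightarrow> 'g) \<Rightarrow>
   ('g \<Rightarrow> 'g \<Rightarrow> 'g) \<Rightarrow> ('g \<Rightarrow> 'v \<Rightarrow> 'v) \<Rightarrow> ('g \<Rightarrow> 'v \<Rightarrow> 'v) \<Rightarrow> ('v \<Rightarrow> 'g) \<Rightarrow> bool" where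
  "relative_RB sv sg br \<rho>L \<rho>R T \<longleftrightarrow>
     Vector_Spaces.linear sv sg T \<and>
     (\<forall>v1 v2. br (T v1) (T v2) = T (\<rho>L (T v1) v2 + \<rho>R (T v2) v1))"

definition RB_bracket ::
  "('g \<Rightarrow> 'v \<Rightarrow> 'v::plus) \<Rightarrow> ('g \<Rightarrow> 'v \<Rightarrow> 'v) \<Rightarrow> ('v \<Rightarrow> 'g) \<Rightarrow> 'v \<Rightarrow> 'v \<Rightarrow> 'v" where
  "RB_bracket \<rho>L \<rho>R T u v = \<rho>L (T u) v + \<rho>R (T v) u"

definition bar_rhoL ::
  "('g \<Rightarrow> 'g \<Rightarrow> 'g::minus) \<Rightarrow> ('g \<Rightarrow> 'v \<Rightarrow> 'v) \<Rightarrow> ('v \<Rightarrow> 'g) \<Rightarrow> 'v \<Rightarrow> 'g \<Rightarrow> 'g" where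
  "bar_rhoL br \<rho>R T u x = br (T u) x - T (\<rho>R x u)"

definition bar_rhoR ::
  "('g \<Rightarrow> 'g \<Rightarrow> 'g::minus) \<Rightarrow> ('g \<Rightarrow> 'v \<Rightarrow> 'v) \<Rightarrow> ('v \<Rightarrow> 'g) \<Rightarrow> 'v \<Rightarrow> 'g \<Rightarrow> 'g" where
  "bar_rhoR br \<rho>L T u x = br x (T u) - T (\<rho>L x u)"

end

theory Submission
  imports Defs
begin

lemma lin_facts:
  assumes "Vector_Spaces.linear s1 s2 f"
  shows "f (a + b) = f a + f b" "f (a - b) = f a - f b" "f (- a) = - f a"
    "f 0 = 0" "f (s1 c a) = s2 c (f a)"
  using assms[unfolded linear_iff_module_hom]
  by (simp_all add: module_hom.add module_hom.diff module_hom.neg module_hom.scale module_hom.zero)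

theorem theorem2p7:
  fixes sg :: "'k::field \<Rightarrow> 'g::ab_group_add \<Rightarrow> 'g"
    and sv :: "'k \<Rightarrow> 'v::ab_group_add \<Rightarrow> 'v"
    and br :: "'g \<Rightarrow> 'g \<Rightarrow> 'g"
    and \<rho>L \<rho>R :: "'g \<Rightarrow> 'v \<Rightarrow> 'v"
    and T :: "'v \<Rightarrow> 'g"
  assumes "leibniz_algebra sg br"
    and "leibniz_rep sg br sv \<rho>L \<rho>R"
    and "relative_RB sv sg br \<rho>L \<rho>R T"
  shows "leibniz_rep sv (RB_bracket \<rho>L \<rho>R T) sg (bar_rhoL br \<rho>R T) (bar_rhoR br \<rho>L T)"
proof -
  have vg: "vector_space sg" and bil: "bilinear_map sg sg sg br"
    and leib: "\<And>x y z. br x (br y z) = br (br x y) z + br y (br x z)"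
    using assms(1) unfolding leibniz_algebra_def by blast+
  have vv: "vector_space sv" and gL: "linear_to_gl sg sv \<rho>L" and gR: "linear_to_gl sg sv \<rho>R"
    and rL: "\<And>x y. \<rho>L (br x y) = commutator (\<rho>L x) (\<rho>L y)"
    and rR: "\<And>x y. \<rho>R (br x y) = commutator (\<rho>L x) (\<rho>R y)"
    and rLR: "\<And>x y. \<rho>R y \<circ> \<rho>L x = - (\<rho>R y \<circ> \<rho>R x)"
    using assms(2) unfolding leibniz_rep_def by blast+
  have linT: "Vector_Spaces.linear sv sg T"
    and RB: "\<And>v1 v2. br (T v1) (T v2) = T (\<rho>L (T v1) v2 + \<rho>R (T v2) v1)"
    using assms(3) unfolding relative_RB_def by blast+
  interpret g: vector_space sg by (rule vg)
  interpret v: vector_space sv by (rule vv)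
  note T = lin_facts[OF linT]
  note b1 = lin_facts[OF bil[unfolded bilinear_map_def, THEN conjunct1, rule_format]]
  note b2 = lin_facts[OF bil[unfolded bilinear_map_def, THEN conjunct2, rule_format], simplified]
  note L1 = lin_facts[OF gL[unfolded linear_to_gl_def, THEN conjunct1, rule_format]]
  note L2 = lin_facts[OF gL[unfolded linear_to_gl_def, THEN conjunct2, rule_format], simplified]
  note R1 = lin_facts[OF gR[unfolded linear_to_gl_def, THEN conjunct1, rule_format]]
  note R2 = lin_facts[OF gR[unfolded linear_to_gl_def, THEN conjunct2, rule_format], simplified]
  have rLR': "\<rho>R y (\<rho>L x w) = - \<rho>R y (\<rho>R x w)" for x y w
    using fun_cong[OF rLR[of y x], of w] by simp
  have lin1: "linear_to_gl sv sg (bar_rhoL br \<rho>R T)"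
    unfolding linear_to_gl_def bar_rhoL_def linear_iff
    apply (simp add: vg vv T b1 b2 L1 L2 R1 R2 g.scale_right_diff_distrib)
    done
  have lin2: "linear_to_gl sv sg (bar_rhoR br \<rho>L T)"
    unfolding linear_to_gl_def bar_rhoR_def linear_iff
    apply (simp add: vg vv T b1 b2 L1 L2 R1 R2 g.scale_right_diff_distrib)
    done
  have sq0: "br (br a a) c = 0" for a c
    using leib[of a a c] by simp
  have sym0: "br (br a b) c + br (br b a) c = 0" for a b c
  proof -
    have "br (br (a + b) (a + b)) c = 0" by (rule sq0)
    then show ?thesis by (simp add: b1 b2 sq0 algebra_simps)
  qed
  have rRe: "\<rho>R (br a x) w = \<rho>L a (\<rho>R x w) - \<rho>R x (\<rho>L a w)" for a x w
    using rR[of a x] by (simp add: commutator_def)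
  have rLe: "\<rho>L (br a x) w = \<rho>L a (\<rho>L x w) - \<rho>L x (\<rho>L a w)" for a x w
    using rL[of a x] by (simp add: commutator_def)
  have I1: "bar_rhoL br \<rho>R T (RB_bracket \<rho>L \<rho>R T u v) x =
      commutator (bar_rhoL br \<rho>R T u) (bar_rhoL br \<rho>R T v) x" for u v x
  proof -
    have h1: "bar_rhoL br \<rho>R T u (bar_rhoL br \<rho>R T v x) = br (T u) (br (T v) x) - T (\<rho>L (T u) (\<rho>R x v)) - T (\<rho>R (br (T v) x) u)"
      for u v unfolding bar_rhoL_def by (simp add: b1(2) R2(2) T(1,2) RB algebra_simps)
    have lhs: "bar_rhoL br \<rho>R T (RB_bracket \<rho>L \<rho>R T u v) x =
       br (br (T u) (T v)) x - T (\<rho>R x (\<rho>L (T u) v)) - T (\<rho>R x (\<rho>R (T v) u))"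
      unfolding bar_rhoL_def RB_bracket_def by (simp add: RB R1(1) T(1) algebra_simps)
    have e3: "\<rho>R x (\<rho>R (T v) u) = - \<rho>R x (\<rho>L (T v) u)" using rLR'[of x "T v" u] by simp
    show ?thesis unfolding commutator_def h1 lhs
      using leib[of "T u" "T v" x]
      by (simp add: e3 rRe T(2,3) algebra_simps)
  qed
  have I2: "bar_rhoR br \<rho>L T (RB_bracket \<rho>L \<rho>R T u v) x =
      commutator (bar_rhoL br \<rho>R T u) (bar_rhoR br \<rho>L T v) x" for u v x
  proof -
    have h3: "bar_rhoL br \<rho>R T u (bar_rhoR br \<rho>L T v x) = br (T u) (br x (T v)) - T (\<rho>L (T u) (\<rho>L x v)) - T (\<rho>R (br x (T v)) u)"
      unfolding bar_rhoL_def bar_rhoR_def by (simp add: b1(2) R2(2) T(1,2) RB algebra_simps)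
    have h4: "bar_rhoR br \<rho>L T v (bar_rhoL br \<rho>R T u x) = br (br (T u) x) (T v) - T (\<rho>R (T v) (\<rho>R x u)) - T (\<rho>L (br (T u) x) v)"
      unfolding bar_rhoL_def bar_rhoR_def by (simp add: b2(2) L2(2) T(1,2) RB algebra_simps)
    have lhs: "bar_rhoR br \<rho>L T (RB_bracket \<rho>L \<rho>R T u v) x =
       br x (br (T u) (T v)) - T (\<rho>L x (\<rho>L (T u) v)) - T (\<rho>L x (\<rho>R (T v) u))"
      unfolding bar_rhoR_def RB_bracket_def by (simp add: RB L1(1) T(1) algebra_simps)
    have e3: "\<rho>R (T v) (\<rho>L x u) = - \<rho>R (T v) (\<rho>R x u)" using rLR'[of "T v" x u] by simp
    show ?thesis unfolding commutator_def h3 h4 lhs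
      using leib[of "T u" x "T v"]
      by (simp add: e3 rRe rLe T(1,2,3) algebra_simps)
  qed
  have I3: "bar_rhoR br \<rho>L T v (bar_rhoL br \<rho>R T u x) = - bar_rhoR br \<rho>L T v (bar_rhoR br \<rho>L T u x)" for u v x
  proof -
    have h4: "bar_rhoR br \<rho>L T v (bar_rhoL br \<rho>R T u x) = br (br (T u) x) (T v) - T (\<rho>R (T v) (\<rho>R x u)) - T (\<rho>L (br (T u) x) v)"
      unfolding bar_rhoL_def bar_rhoR_def by (simp add: b2(2) L2(2) T(1,2) RB algebra_simps)
    have h5: "bar_rhoR br \<rho>L T v (bar_rhoR br \<rho>L T u x) = br (br x (T u)) (T v) - T (\<rho>R (T v) (\<rho>L x u)) - T (\<rho>L (br x (T u)) v)"
      unfolding bar_rhoR_def by (simp add: b2(2) L2(2) T(1,2) RB algebra_simps)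
    have e3: "\<rho>R (T v) (\<rho>L x u) = - \<rho>R (T v) (\<rho>R x u)" using rLR'[of "T v" x u] by simp
    have s: "br (br x (T u)) (T v) = - br (br (T u) x) (T v)"
      using sym0[of "T u" x "T v"] by (simp add: eq_neg_iff_add_eq_0 add.commute)
    show ?thesis unfolding h4 h5
      by (simp add: e3 s rLe T(2,3) algebra_simps)
  qed
  show ?thesis
    unfolding leibniz_rep_def
    by (intro conjI vg lin1 lin2 allI ext) (simp_all add: I1 I2 I3)
qed

end
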